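(* Fix an integer $d\geq 2$ and $\theta\in\mathbb{R}$, and let $w=\frac{e^{id\theta}-de^{i\theta}}{d+1}$ with $|w|<1$. Let $z_0$ be the Denjoy–Wolff point of $B_w(z)=\left(\frac{z-w}{1-\overline{w}z}\right)^d$. Then $z_0=e^{id\theta}$.
   Context: $\mathbb{D}$ denotes the open unit disk. By the Denjoy–Wolff theorem, a finite Blaschke product $B$ of degree at least $2$ has a unique point $z_0\in\overline{\mathbb{D}}$, its Denjoy–Wolff point, such that $B^n(z)\to z_0$ for every $z\in\mathbb{D}$. *)

theory Defs
  imports "HOL-Analysis.Analysis"
begin

definition blaschke_pow :: "complex \<Rightarrow> nat \<Rightarrow> complex \<Rightarrow> complex" where
  "blaschke_pow w d z = ((z - w) / (1 - cnj w * z)) ^ d"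

definition denjoy_wolff_point :: "(complex \<Rightarrow> complex) \<Rightarrow> complex" where
  "denjoy_wolff_point B =
     (THE z0. z0 \<in> cball 0 1 \<and> (\<forall>z\<in>ball 0 1. (\<lambda>n. (B ^^ n) z) \<longlonglongrightarrow> z0))"

end

theory Submission
  imports Defs
begin


lemma lagrange_id:
  fixes a :: "nat \<Rightarrow> complex"
  shows "(\<Sum>i<d. \<Sum>j<d. (norm (a i - a j))\<^sup>2) = 2 * of_nat d * (\<Sum>i<d. (norm (a i))\<^sup>2) - 2 * (norm (\<Sum>i<d. a i))\<^sup>2"
proof -
  have "complex_of_real (\<Sum>i<d. \<Sum>j<d. (norm (a i - a j))\<^sup>2) = (\<Sum>i<d. \<Sum>j<d. (a i - a j) * cnj (a i - a j))"
    by (simp only: of_real_sum complex_norm_square)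
  also have "\<dots> = (\<Sum>i<d. \<Sum>j<d. a i * cnj (a i) + a j * cnj (a j) - a i * cnj (a j) - a j * cnj (a i))"
    by (intro sum.cong refl) (simp add: algebra_simps)
  also have "\<dots> = (\<Sum>i<d. \<Sum>j<d. a i * cnj (a i)) + (\<Sum>i<d. \<Sum>j<d. a j * cnj (a j)) - (\<Sum>i<d. \<Sum>j<d. a i * cnj (a j)) - (\<Sum>i<d. \<Sum>j<d. a j * cnj (a i))"
    by (simp only: sum.distrib sum_subtractf)
  also have "(\<Sum>i<d. \<Sum>j<d. a i * cnj (a j)) = (\<Sum>i<d. a i) * cnj (\<Sum>i<d. a i)"
    by (simp add: sum_distrib_left sum_distrib_right) (rule sum.swap)
  also have "(\<Sum>i<d. \<Sum>j<d. a j * cnj (a i)) = (\<Sum>i<d. a i) * cnj (\<Sum>i<d. a i)"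
    by (simp add: sum_distrib_left sum_distrib_right mult.commute)
  also have "(\<Sum>i<d. \<Sum>j<d. a j * cnj (a j)) = of_nat d * (\<Sum>i<d. a i * cnj (a i))"
    by simp
  also have "(\<Sum>i<d. \<Sum>j<d. a i * cnj (a i)) = of_nat d * (\<Sum>i<d. a i * cnj (a i))"
    by (simp add: sum_distrib_left)
  also have "of_nat d * (\<Sum>i<d. a i * cnj (a i)) + of_nat d * (\<Sum>i<d. a i * cnj (a i)) - (\<Sum>i<d. a i) * cnj (\<Sum>i<d. a i) - (\<Sum>i<d. a i) * cnj (\<Sum>i<d. a i) = complex_of_real (2 * of_nat d * (\<Sum>i<d. (norm (a i))\<^sup>2) - 2 * (norm (\<Sum>i<d. a i))\<^sup>2)"
    by (simp only: of_real_diff of_real_mult of_real_sum complex_norm_square of_real_numeral of_real_of_nat_eq) (simp add: algebra_simps)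
  finally show ?thesis using of_real_eq_iff by blast
qed

lemma lagrange_ge:
  fixes a :: "nat \<Rightarrow> complex"
  assumes "i < d" "j < d" "i \<noteq> j"
  shows "(norm (a i - a j))\<^sup>2 \<le> of_nat d * (\<Sum>i<d. (norm (a i))\<^sup>2) - (norm (\<Sum>i<d. a i))\<^sup>2"
proof -
  have "(\<Sum>k\<in>{i,j}. \<Sum>l<d. (norm (a k - a l))\<^sup>2) \<le> (\<Sum>k<d. \<Sum>l<d. (norm (a k - a l))\<^sup>2)"
    using assms by (intro sum_mono2) (auto intro: sum_nonneg)
  moreover have "(norm (a i - a j))\<^sup>2 \<le> (\<Sum>l<d. (norm (a i - a l))\<^sup>2)"
    using assms by (intro member_le_sum[where f="\<lambda>l. (norm (a i - a l))\<^sup>2"]) auto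
  moreover have "(norm (a j - a i))\<^sup>2 \<le> (\<Sum>l<d. (norm (a j - a l))\<^sup>2)"
    using assms by (intro member_le_sum[where f="\<lambda>l. (norm (a j - a l))\<^sup>2"]) auto
  moreover have "norm (a j - a i) = norm (a i - a j)" by (rule norm_minus_commute)
  ultimately show ?thesis using assms lagrange_id[of a d] by simp
qed



lemma key_step:
  fixes \<zeta> \<eta> w z :: complex and d :: nat
  assumes d2: "d \<ge> 2" and nz: "norm \<zeta> = 1" and eta: "\<eta> = \<zeta> ^ d"
    and wdef: "w = (\<eta> - of_nat d * \<zeta>) / (of_nat d + 1)"
    and w1: "norm w < 1" and z1: "norm z < 1"
  shows "norm (((z - w) / (1 - cnj w * z)) ^ d) < 1 \<and>
     (1 - (norm (((z - w) / (1 - cnj w * z)) ^ d))\<^sup>2) / (norm (\<eta> - ((z - w) / (1 - cnj w * z)) ^ d))\<^sup>2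
     \<ge> (1 - (norm z)\<^sup>2) / (norm (\<eta> - z))\<^sup>2 + (1 - (norm w)\<^sup>2) / (4 * of_nat d ^ 3) * (1 - (norm z)\<^sup>2)"
proof -
  define D where "D = 1 - cnj w * z"
  define u where "u = (z - w) / D"
  define k where "k = (1 + \<zeta> * cnj \<eta>) / (of_nat d + 1)"
  have zz: "\<zeta> * cnj \<zeta> = 1" using nz by (metis complex_norm_square mult_1 of_real_1 power_one)
  have ne: "norm \<eta> = 1" using nz eta by (simp add: norm_power)
  have ee: "\<eta> * cnj \<eta> = 1" using ne by (metis complex_norm_square mult_1 of_real_1 power_one)
  have "norm (cnj w * z) < 1"
    using w1 z1 by (simp add: norm_mult) (metis mult_strict_mono' norm_ge_zero mult_1 )
  hence Dnz: "D \<noteq> 0" unfolding D_def by (metis norm_one right_minus_eq order_less_irrefl)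
  have uD: "u * D = z - w" unfolding u_def using Dnz by simp
  have cw: "cnj w = (cnj \<eta> - of_nat d * cnj \<zeta>) / (of_nat d + 1)"
    using wdef by simp
  have dp: "(of_nat d + 1 :: complex) \<noteq> 0" by (metis of_nat_Suc of_nat_eq_0_iff Suc_neq_Zero add.commute)
  have id1c: "D * cnj D - (z - w) * cnj (z - w) = (1 - w * cnj w) * (1 - z * cnj z)"
    unfolding D_def by (simp add: algebra_simps)
  have id1: "(norm D)\<^sup>2 - (norm (z - w))\<^sup>2 = (1 - (norm w)\<^sup>2) * (1 - (norm z)\<^sup>2)"
  proof -
    have "complex_of_real ((norm D)\<^sup>2 - (norm (z - w))\<^sup>2) = complex_of_real ((1 - (norm w)\<^sup>2) * (1 - (norm z)\<^sup>2))"
      by (simp only: of_real_diff of_real_mult of_real_1 complex_norm_square id1c)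
    thus ?thesis using of_real_eq_iff by blast
  qed
  have uu: "(1 - (norm u)\<^sup>2) * (norm D)\<^sup>2 = (1 - (norm w)\<^sup>2) * (1 - (norm z)\<^sup>2)"
  proof -
    have "norm u * norm D = norm (z - w)" using uD by (metis norm_mult)
    hence "(norm u)\<^sup>2 * (norm D)\<^sup>2 = (norm (z - w))\<^sup>2" by (metis power_mult_distrib)
    thus ?thesis using id1 by (simp add: algebra_simps)
  qed
  have h1: "(of_nat d + 1) * w = \<eta> - of_nat d * \<zeta>" using wdef dp by simp
  have h2: "(of_nat d + 1) * cnj w = cnj \<eta> - of_nat d * cnj \<zeta>" using cw dp by simp
  have h3: "(of_nat d + 1) * k = 1 + \<zeta> * cnj \<eta>" using k_def dp by simp
  have h4: "(of_nat d + 1) * cnj k = 1 + cnj \<zeta> * \<eta>" using k_def dp by simp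
  have id2: "(\<zeta> - u) * D = k * (\<eta> - z)"
  proof -
    have "(\<zeta> - u) * D = \<zeta> * D - (z - w)" using uD by (simp add: algebra_simps)
    also have "\<dots> = k * (\<eta> - z)"
      unfolding D_def using h1 h2 h3 zz ee dp by algebra
    finally show ?thesis .
  qed
  have id3c: "1 - w * cnj w = of_nat d * (k * cnj k)"
    using h1 h2 h3 h4 zz ee dp by algebra
  have id3: "1 - (norm w)\<^sup>2 = of_nat d * (norm k)\<^sup>2"
  proof -
    have "complex_of_real (1 - (norm w)\<^sup>2) = complex_of_real (of_nat d * (norm k)\<^sup>2)"
      by (simp only: of_real_diff of_real_mult of_real_1 complex_norm_square id3c of_real_of_nat_eq)
    thus ?thesis using of_real_eq_iff by blast
  qed
  have Dpos: "norm D > 0" using Dnz by simp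
  have D2: "norm D \<le> 2"
  proof -
    have "norm D \<le> 1 + norm (cnj w * z)" unfolding D_def using norm_triangle_ineq4[of 1 "cnj w * z"] by simp
    thus ?thesis using \<open>norm (cnj w * z) < 1\<close> by simp
  qed
  have sq2: "(norm (\<zeta> - u))\<^sup>2 * (norm D)\<^sup>2 = (norm k)\<^sup>2 * (norm (\<eta> - z))\<^sup>2"
    using arg_cong[OF id2, of norm] by (metis norm_mult power_mult_distrib)
  have K1: "(1 - (norm u)\<^sup>2) * (norm (\<eta> - z))\<^sup>2 = of_nat d * (1 - (norm z)\<^sup>2) * (norm (\<zeta> - u))\<^sup>2"
  proof -
    have "((1 - (norm u)\<^sup>2) * (norm (\<eta> - z))\<^sup>2) * (norm D)\<^sup>2 = (of_nat d * (1 - (norm z)\<^sup>2) * (norm (\<zeta> - u))\<^sup>2) * (norm D)\<^sup>2"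
    proof -
      have "((1 - (norm u)\<^sup>2) * (norm (\<eta> - z))\<^sup>2) * (norm D)\<^sup>2 = ((1 - (norm u)\<^sup>2) * (norm D)\<^sup>2) * (norm (\<eta> - z))\<^sup>2"
        by (simp add: algebra_simps)
      also have "\<dots> = of_nat d * (1 - (norm z)\<^sup>2) * ((norm k)\<^sup>2 * (norm (\<eta> - z))\<^sup>2)"
        by (subst uu, subst id3, simp add: algebra_simps)
      also have "\<dots> = (of_nat d * (1 - (norm z)\<^sup>2) * (norm (\<zeta> - u))\<^sup>2) * (norm D)\<^sup>2"
        using sq2 by (simp add: algebra_simps)
      finally show ?thesis .
    qed
    thus ?thesis using Dpos by simp
  qed
  have zpos: "1 - (norm z)\<^sup>2 > 0" using z1 by (simp add: abs_square_less_1)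
  have wpos: "1 - (norm w)\<^sup>2 > 0" using w1 by (simp add: abs_square_less_1)
  have Apos: "1 - (norm u)\<^sup>2 > 0"
  proof -
    have "(1 - (norm u)\<^sup>2) * (norm D)\<^sup>2 > 0" using uu zpos wpos by simp
    thus ?thesis using Dpos by (simp add: zero_less_mult_iff)
  qed
  have u1: "norm u < 1" using Apos by (simp add: abs_square_less_1)
  have Epos: "(norm (\<eta> - z))\<^sup>2 > 0" using ne z1 by auto
  have Zpos: "(norm (\<zeta> - u))\<^sup>2 > 0" using nz u1 by auto
  define a where "a i = u ^ (d - Suc i) * \<zeta> ^ i" for i
  define P where "P = (\<Sum>i<d. a i)"
  define S where "S = (\<Sum>i<d. (norm (a i))\<^sup>2)"
  have fac: "\<eta> - u ^ d = (\<zeta> - u) * P"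
    unfolding eta P_def a_def by (rule power_diff_sumr2)
  have na: "(norm (a i))\<^sup>2 = ((norm u)\<^sup>2) ^ (d - Suc i)" for i
    unfolding a_def using nz by (simp add: norm_mult norm_power power_mult[symmetric] mult.commute)
  have Sfac: "1 - (norm (u ^ d))\<^sup>2 = (1 - (norm u)\<^sup>2) * S"
  proof -
    have "(1::real) ^ d - ((norm u)\<^sup>2) ^ d = (1 - (norm u)\<^sup>2) * (\<Sum>i<d. ((norm u)\<^sup>2) ^ (d - Suc i) * 1 ^ i)"
      by (rule power_diff_sumr2)
    thus ?thesis unfolding S_def na by (simp add: norm_power power_mult[symmetric] mult.commute)
  qed
  have lag: "(norm (a (d - 1) - a (d - 2)))\<^sup>2 \<le> of_nat d * S - (norm P)\<^sup>2"
    unfolding S_def P_def using d2 by (intro lagrange_ge) auto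
  have adiff: "a (d - 1) - a (d - 2) = \<zeta> ^ (d - 2) * (\<zeta> - u)"
  proof -
    have e1: "d - Suc (d - 1) = 0" "d - Suc (d - 2) = 1" using d2 by auto
    have e2: "\<zeta> ^ (d - 1) = \<zeta> ^ (d - 2) * \<zeta>" using d2
      by (metis Suc_diff_Suc Suc_1 less_le_trans lessI power_Suc2)
    show ?thesis unfolding a_def e1 e2 by (simp add: algebra_simps)
  qed
  have lag2: "(norm (\<zeta> - u))\<^sup>2 \<le> of_nat d * S - (norm P)\<^sup>2"
    using lag unfolding adiff using nz by (simp add: norm_mult norm_power)
  have Ple: "norm P \<le> of_nat d"
  proof -
    have "norm P \<le> (\<Sum>i<d. norm (a i))" unfolding P_def by (rule norm_sum)
    also have "\<dots> \<le> (\<Sum>i<d. 1)"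
      by (intro sum_mono) (simp add: a_def norm_mult norm_power nz power_le_one u1 less_imp_le)
    finally show ?thesis by simp
  qed
  have ud1: "norm (u ^ d) < 1" using u1 d2 by (simp add: norm_power power_less_one_iff)
  have Pnz: "P \<noteq> 0" using fac ud1 ne by auto
  have Ppos: "(norm P)\<^sup>2 > 0" using Pnz by simp
  have Pd: "(norm P)\<^sup>2 \<le> of_nat d ^ 2" using Ple by (simp add: power_mono)
  define A where "A = 1 - (norm u)\<^sup>2"
  define Z where "Z = (norm (\<zeta> - u))\<^sup>2"
  define Pn where "Pn = (norm P)\<^sup>2"
  have dpos: "real d > 0" using d2 by simp
  have QB: "(1 - (norm (u ^ d))\<^sup>2) / (norm (\<eta> - u ^ d))\<^sup>2 = A * S / (Z * Pn)"
    unfolding Sfac fac A_def Z_def Pn_def by (simp add: norm_mult power_mult_distrib)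
  have Qz: "(1 - (norm z)\<^sup>2) / (norm (\<eta> - z))\<^sup>2 = A / (of_nat d * Z)"
    using K1 Epos Zpos dpos unfolding A_def Z_def by (simp add: field_simps)
  have cb: "(1 - (norm w)\<^sup>2) / (4 * of_nat d ^ 3) * (1 - (norm z)\<^sup>2) \<le> A / of_nat d ^ 3"
  proof -
    have "(1 - (norm w)\<^sup>2) * (1 - (norm z)\<^sup>2) \<le> A * 4"
    proof -
      have "(norm D)\<^sup>2 \<le> 4" using D2 Dpos by (metis power_mono less_imp_le numeral_Bit0 power2_eq_square mult_2 numeral_One one_add_one power_one_right)
      hence "A * (norm D)\<^sup>2 \<le> A * 4" using Apos unfolding A_def by (intro mult_left_mono) auto
      thus ?thesis using uu unfolding A_def by simp
    qed
    hence "(1 - (norm w)\<^sup>2) * (1 - (norm z)\<^sup>2) / (4 * of_nat d ^ 3) \<le> A * 4 / (4 * of_nat d ^ 3)"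
      using dpos by (intro divide_right_mono) auto
    thus ?thesis by simp
  qed
  have main: "A * S / (Z * Pn) \<ge> A / (of_nat d * Z) + A / of_nat d ^ 3"
  proof -
    have ZP: "Z > 0" "Pn > 0" "A > 0" using Zpos Ppos Apos unfolding Z_def Pn_def A_def by auto
    have l2: "Z \<le> of_nat d * S - Pn" using lag2 unfolding Z_def Pn_def .
    have "A * S / (Z * Pn) - A / (of_nat d * Z) = A * (of_nat d * S - Pn) / (of_nat d * Z * Pn)"
      using ZP dpos by (simp add: field_simps)
    also have "\<dots> \<ge> A * Z / (of_nat d * Z * Pn)"
      using ZP dpos l2 by (intro divide_right_mono mult_left_mono) auto
    moreover have "A * Z / (of_nat d * Z * Pn) = A / (of_nat d * Pn)" using ZP by simp
    moreover have "A / (of_nat d * Pn) \<ge> A / (of_nat d * of_nat d ^ 2)"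
      using ZP dpos Pd unfolding Pn_def by (intro divide_left_mono mult_left_mono mult_pos_pos) auto
    moreover have "A / (of_nat d * of_nat d ^ 2) = A / (of_nat d ^ 3 :: real)" by (simp add: power_numeral_reduce)
    ultimately show ?thesis by linarith
  qed
  show ?thesis
    using ud1 QB Qz cb main unfolding u_def D_def by linarith
qed



lemma seq_conv:
  fixes Q e :: "nat \<Rightarrow> real" and K :: real
  assumes K: "K > 0" and mono: "\<And>n. Q n \<le> Q (Suc n)" and Q0: "Q 0 > 0"
    and e0: "\<And>n. 0 \<le> e n" and e1: "\<And>n. e n \<le> 1 / Q n"
    and e2: "\<And>n. e n \<le> (Q (Suc n) - Q n) / K"
  shows "e \<longlonglongrightarrow> 0"
proof -
  have inc: "incseq Q" using mono by (rule incseq_SucI)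
  show ?thesis
  proof (cases "\<exists>M. \<forall>n. Q n \<le> M")
    case True
    then obtain M where "\<forall>n. Q n \<le> M" by blast
    then obtain L where L: "Q \<longlonglongrightarrow> L" using incseq_convergent[OF inc] by blast
    have "(\<lambda>n. (Q (Suc n) - Q n) / K) \<longlonglongrightarrow> (L - L) / K"
      using K by (intro tendsto_intros L[THEN LIMSEQ_Suc] L) auto
    hence g: "(\<lambda>n. (Q (Suc n) - Q n) / K) \<longlonglongrightarrow> 0" by simp
    show ?thesis
      by (rule real_tendsto_sandwich[OF _ _ tendsto_const g]) (auto intro!: always_eventually intro: e0 e2)
  next
    case False
    have "filterlim Q at_top sequentially"
      unfolding filterlim_at_top eventually_sequentially
    proof
      fix Z
      from False obtain N where "Q N > Z" by (meson not_le)
      thus "\<exists>N. \<forall>n\<ge>N. Z \<le> Q n" using inc by (meson incseqD less_imp_le order_trans)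
    qed
    hence h: "(\<lambda>n. inverse (Q n)) \<longlonglongrightarrow> 0" by (rule tendsto_inverse_0_at_top)
    show ?thesis
      by (rule real_tendsto_sandwich[OF _ _ tendsto_const h]) (auto intro!: always_eventually intro: e0 simp: e1[simplified inverse_eq_divide[symmetric]])
  qed
qed

theorem corollary2p2:
  fixes d :: nat and \<theta> :: real and w :: complex
  assumes "d \<ge> 2"
    and "w = (exp (\<i> * of_nat d * of_real \<theta>) - of_nat d * exp (\<i> * of_real \<theta>)) / (of_nat d + 1)"
    and "norm w < 1"
  shows "denjoy_wolff_point (blaschke_pow w d) = exp (\<i> * of_nat d * of_real \<theta>)"
proof -
  define \<zeta> where "\<zeta> = exp (\<i> * of_real \<theta>)"
  define \<eta> where "\<eta> = exp (\<i> * of_nat d * of_real \<theta>)"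
  have nz: "norm \<zeta> = 1" unfolding \<zeta>_def by simp
  have eta: "\<eta> = \<zeta> ^ d"
  proof -
    have "\<i> * of_nat d * of_real \<theta> = of_nat d * (\<i> * of_real \<theta>)" by (simp add: algebra_simps)
    thus ?thesis unfolding \<eta>_def \<zeta>_def by (simp only: exp_of_nat_mult)
  qed
  have wdef: "w = (\<eta> - of_nat d * \<zeta>) / (of_nat d + 1)" using assms(2) unfolding \<eta>_def \<zeta>_def .
  define B where "B = blaschke_pow w d"
  define c where "c = (1 - (norm w)\<^sup>2) / (4 * of_nat d ^ 3)"
  define Q where "Q x = (1 - (norm x)\<^sup>2) / (norm (\<eta> - x))\<^sup>2" for x
  have ne: "norm \<eta> = 1" using nz eta by (simp add: norm_power)
  have cpos: "c > 0" unfolding c_def using assms(1,3) by (simp add: abs_square_less_1)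
  have step: "norm (B x) < 1 \<and> Q (B x) \<ge> Q x + c * (1 - (norm x)\<^sup>2)" if "norm x < 1" for x
    using key_step[OF assms(1) nz eta wdef assms(3) that] unfolding B_def blaschke_pow_def Q_def c_def
    by simp
  have Qpos: "Q x > 0" if "norm x < 1" for x
  proof -
    have "1 - (norm x)\<^sup>2 > 0" using that by (simp add: abs_square_less_1)
    moreover have "norm (\<eta> - x) > 0" using ne that by auto
    ultimately show ?thesis unfolding Q_def by simp
  qed
  have conv: "(\<lambda>n. (B ^^ n) z) \<longlonglongrightarrow> \<eta>" if z: "norm z < 1" for z
  proof -
    define zs where "zs n = (B ^^ n) z" for n
    have zsS: "zs (Suc n) = B (zs n)" for n unfolding zs_def by simp
    have zin: "norm (zs n) < 1" for n
      by (induction n) (use z step in \<open>auto simp: zsS zs_def\<close>)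
    define e where "e n = (norm (\<eta> - zs n))\<^sup>2" for n
    have mono: "Q (zs n) \<le> Q (zs (Suc n))" for n
    proof -
      have "0 \<le> c * (1 - (norm (zs n))\<^sup>2)" using cpos zin[of n] by (simp add: abs_square_less_1 less_imp_le)
      thus ?thesis using step[OF zin[of n]] zsS by simp
    qed
    have Qge: "Q (zs 0) \<le> Q (zs n)" for n
      using mono by (induction n) (auto intro: order_trans)
    have eQ: "e n * Q (zs n) = 1 - (norm (zs n))\<^sup>2" for n
    proof -
      have "norm (\<eta> - zs n) > 0" using ne zin[of n] by auto
      thus ?thesis unfolding e_def Q_def by simp
    qed
    have e0: "0 \<le> e n" for n unfolding e_def by simp
    have e1: "e n \<le> 1 / Q (zs n)" for n
    proof -
      have "e n * Q (zs n) \<le> 1" using eQ[of n] by simp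
      thus ?thesis using Qpos[OF zin[of n]] by (simp add: field_simps)
    qed
    have e2: "e n \<le> (Q (zs (Suc n)) - Q (zs n)) / (c * Q (zs 0))" for n
    proof -
      have q0: "Q (zs 0) > 0" using Qpos zin by blast
      have a: "e n * Q (zs 0) \<le> 1 - (norm (zs n))\<^sup>2"
        using eQ[of n] Qge[of n] e0[of n] by (metis mult_left_mono)
      have b: "c * (1 - (norm (zs n))\<^sup>2) \<le> Q (zs (Suc n)) - Q (zs n)"
        using step[OF zin[of n]] zsS by simp
      have "c * (e n * Q (zs 0)) \<le> Q (zs (Suc n)) - Q (zs n)"
        using a b cpos by (meson mult_left_mono less_imp_le order_trans)
      thus ?thesis using cpos q0 by (simp add: field_simps)
    qed
    have "e \<longlonglongrightarrow> 0"
      by (rule seq_conv[where Q="\<lambda>n. Q (zs n)" and K="c * Q (zs 0)"])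
         (use cpos Qpos zin mono e0 e1 e2 in auto)
    hence "(\<lambda>n. sqrt (e n)) \<longlonglongrightarrow> sqrt 0" by (rule tendsto_real_sqrt)
    hence "(\<lambda>n. norm (zs n - \<eta>)) \<longlonglongrightarrow> 0" unfolding e_def by (simp add: norm_minus_commute)
    hence "(\<lambda>n. zs n - \<eta>) \<longlonglongrightarrow> 0" by (simp add: tendsto_norm_zero_iff)
    thus ?thesis unfolding zs_def by (simp add: LIM_zero_iff)
  qed
  have "denjoy_wolff_point B = \<eta>"
    unfolding denjoy_wolff_point_def
  proof (rule the_equality)
    show "\<eta> \<in> cball 0 1 \<and> (\<forall>z\<in>ball 0 1. (\<lambda>n. (B ^^ n) z) \<longlonglongrightarrow> \<eta>)"
      using ne conv by auto
  next
    fix y assume "y \<in> cball 0 1 \<and> (\<forall>z\<in>ball 0 1. (\<lambda>n. (B ^^ n) z) \<longlonglongrightarrow> y)"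
    hence "(\<lambda>n. (B ^^ n) 0) \<longlonglongrightarrow> y" by auto
    moreover have "(\<lambda>n. (B ^^ n) 0) \<longlonglongrightarrow> \<eta>" using conv by simp
    ultimately show "y = \<eta>" by (rule LIMSEQ_unique)
  qed
  thus ?thesis unfolding B_def \<eta>_def .
qed

end
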